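(* Let $\mathbb{F}$ be an algebraically closed field of characteristic zero and $J_1=E_{12}$. Let $\underline{A}=(J_1,A_2,A_3)$ and $\underline{B}=(0,B_2,B_3)$ be elements of $\mathcal{N}_3^3$ such that $f(\underline{A})=f(\underline{B})$ for all $f\in S_{3,3}$. Then $f(\underline{A})=f(\underline{B})$ for all $f\in P_{3,3}$.
   Context: $E_{ij}$ is the $3\times3$ matrix unit. $\mathcal{N}_3^3$ is the set of triples of nilpotent $3\times3$ matrices over $\mathbb{F}$. $\mathrm{tr}(Y_{i_1}\cdots Y_{i_r})$ denotes the function $\underline{A}\mapsto\mathrm{tr}(A_{i_1}\cdots A_{i_r})$. $S_{3,3}$ is the set consisting of: $\mathrm{tr}(Y_iY_j),\ \mathrm{tr}(Y_i^2Y_j),\ \mathrm{tr}(Y_iY_j^2),\ \mathrm{tr}(Y_i^2Y_j^2),\ \mathrm{tr}(Y_i^2Y_j^2Y_iY_j)$ for $1\le i<j\le3$; $\mathrm{tr}(Y_1Y_2Y_3)$, $\mathrm{tr}(Y_1Y_3Y_2)$; $\mathrm{tr}(Y_i^2Y_jY_k)$ for $\{i,j,k\}=\{1,2,3\}$; $\mathrm{tr}(Y_1^2Y_2Y_1Y_3)$, $\mathrm{tr}(Y_2^2Y_1Y_2Y_3)$, $\mathrm{tr}(Y_3^2Y_1Y_3Y_2)$. $P_{3,3}=S_{3,3}\sqcup P'_{3,3}$, where $P'_{3,3}$ consists of $\mathrm{tr}(Y_i^2Y_j^2Y_k)$ and $\mathrm{tr}(Y_i^2Y_j^2Y_iY_k)$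 for $\{i,j,k\}=\{1,2,3\}$, and $\mathrm{tr}(Y_1^2Y_2^2Y_3^2)$. *)

theory Defs
  imports "HOL-Analysis.Analysis" "HOL-Computational_Algebra.Polynomial"
begin

type_synonym 'a mat3 = "'a^3^3"

text \<open>Matrix unit E_ij (indices 1,2,3 as elements of the numeral type 3).\<close>
definition matunit :: "3 \<Rightarrow> 3 \<Rightarrow> 'a::semiring_1 mat3" where
  "matunit p q = (\<chi> i j. if i = p \<and> j = q then 1 else 0)"

text \<open>Nilpotent matrix: some power is zero.\<close>
definition nilpotent_mat :: "'a::semiring_1 mat3 \<Rightarrow> bool" where
  "nilpotent_mat A \<longleftrightarrow> (\<exists>k::nat. (((**) A) ^^ k) (mat 1) = 0)"

text \<open>A triple (A1,A2,A3) viewed as the map i \<mapsto> A_i (i = 1,2,3).\<close>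
definition triple :: "'a mat3 \<Rightarrow> 'a mat3 \<Rightarrow> 'a mat3 \<Rightarrow> nat \<Rightarrow> 'a mat3" where
  "triple X1 X2 X3 i = (if i = 1 then X1 else if i = 2 then X2 else X3)"

text \<open>The trace function tr(Y_{i1}...Y_{ir}) given by the word [i1,...,ir],
  evaluated at the triple T.\<close>
definition trw :: "(nat \<Rightarrow> 'a::comm_semiring_1 mat3) \<Rightarrow> nat list \<Rightarrow> 'a" where
  "trw T w = trace (foldr (\<lambda>i M. T i ** M) w (mat 1))"

definition S33 :: "nat list set" where
  "S33 =
     {w. \<exists>i j. 1 \<le> i \<and> i < j \<and> j \<le> 3 \<and>
        (w = [i,j] \<or> w = [i,i,j] \<or> w = [i,j,j] \<or> w = [i,i,j,j] \<or> w = [i,i,j,j,i,j])}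
   \<union> {[1,2,3], [1,3,2]}
   \<union> {[i,i,j,k] | i j k. {i,j,k} = {1,2,3::nat}}
   \<union> {[1,1,2,1,3], [2,2,1,2,3], [3,3,1,3,2]}"

definition P33' :: "nat list set" where
  "P33' =
     {[i,i,j,j,k] | i j k. {i,j,k} = {1,2,3::nat}}
   \<union> {[i,i,j,j,i,k] | i j k. {i,j,k} = {1,2,3::nat}}
   \<union> {[1,1,2,2,3,3]}"

definition P33 :: "nat list set" where
  "P33 = S33 \<union> P33'"

end

theory Submission
  imports Defs
begin


lemma mm3: "((A::'a::comm_ring_1 mat3) ** B)$i$j = A$i$1*B$1$j + A$i$2*B$2$j + A$i$3*B$3$j"
  by (simp add: matrix_matrix_mult_def sum_3)

lemma mat_ent: "(mat c :: 'a::comm_ring_1 mat3)$i$j = (if i = j then c else 0)"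
  by (simp add: mat_def)

lemma step:
  fixes A M P :: "'a::comm_ring_1 mat3"
  assumes "(mat 1 - mat t ** A) ** P = mat 1 - mat (t^k) ** M"
  shows "(mat 1 - mat t ** A) ** (P + mat (t^k) ** M) = mat 1 - mat (t^Suc k) ** (A ** M)"
proof -
  have e: "(mat 1 - mat t ** A) ** (P + mat (t^k) ** M) = (mat 1 - mat t ** A) ** P + (mat 1 - mat t ** A) ** (mat (t^k) ** M)"
    by (rule matrix_add_ldistrib)
  have f: "(mat 1 - mat t ** A) ** (mat (t^k) ** M) = mat (t^k) ** M - mat (t^Suc k) ** (A ** M)"
    by (simp add: vec_eq_iff forall_3 mm3 mat_ent algebra_simps)
  show ?thesis unfolding e f assms by simp
qed

lemma invex:
  fixes A :: "'a::comm_ring_1 mat3"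
  shows "\<exists>P. (mat 1 - mat t ** A) ** P = mat 1 - mat (t^k) ** (((**) A ^^ k) (mat 1))"
proof (induction k)
  case 0
  show ?case by (rule exI[of _ 0]) (simp add: vec_eq_iff forall_3 mm3 mat_ent)
next
  case (Suc k)
  then obtain P where "(mat 1 - mat t ** A) ** P = mat 1 - mat (t^k) ** (((**) A ^^ k) (mat 1))" by blast
  from step[OF this] show ?case by auto
qed

lemma detnz:
  fixes A :: "'a::field mat3"
  assumes "nilpotent_mat A"
  shows "det (mat 1 - mat t ** A) \<noteq> 0"
proof -
  obtain k where k: "((**) A ^^ k) (mat 1) = 0" using assms unfolding nilpotent_mat_def by blast
  obtain P where "(mat 1 - mat t ** A) ** P = mat 1 - mat (t^k) ** (((**) A ^^ k) (mat 1))"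
    using invex by blast
  hence "(mat 1 - mat t ** A) ** P = mat 1" unfolding k by (simp add: vec_eq_iff forall_3 mm3 mat_ent)
  hence "det (mat 1 - mat t ** A) * det P = 1" by (metis det_mul det_I)
  thus ?thesis by auto
qed

definition c1 :: "'a::comm_ring_1 mat3 \<Rightarrow> 'a" where
  "c1 A = A$1$1 + A$2$2 + A$3$3"
definition c2 :: "'a::comm_ring_1 mat3 \<Rightarrow> 'a" where
  "c2 A = A$1$1*A$2$2 - A$1$2*A$2$1 + A$1$1*A$3$3 - A$1$3*A$3$1 + A$2$2*A$3$3 - A$2$3*A$3$2"

lemma detexp:
  fixes A :: "'a::comm_ring_1 mat3"
  shows "det (mat 1 - mat t ** A) = 1 - c1 A * t + c2 A * t^2 - det A * t^3"
  by (simp add: det_3 mm3 mat_ent c1_def c2_def algebra_simps power2_eq_square power3_eq_cube)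

lemma polyroot:
  fixes a b c :: "'a::alg_closed_field"
  assumes "\<forall>t. 1 + a*t + b*t^2 + c*t^3 \<noteq> 0"
  shows "a = 0 \<and> b = 0 \<and> c = 0"
proof -
  have c: "c = 0"
  proof (rule ccontr)
    assume "c \<noteq> 0"
    then obtain x where "(\<Sum>k\<le>3. (\<lambda>k. [1,a,b,c] ! k) k * x ^ k) = 0"
      using alg_closed[of 3 "\<lambda>k. [1,a,b,c] ! k"] by auto
    hence "1 + a*x + b*x^2 + c*x^3 = 0" by (simp add: eval_nat_numeral algebra_simps)
    with assms show False by blast
  qed
  have b: "b = 0"
  proof (rule ccontr)
    assume "b \<noteq> 0"
    then obtain x where "(\<Sum>k\<le>2. (\<lambda>k. [1,a,b] ! k) k * x ^ k) = 0"
      using alg_closed[of 2 "\<lambda>k. [1,a,b] ! k"] by auto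
    hence "1 + a*x + b*x^2 + c*x^3 = 0" using c by (simp add: eval_nat_numeral algebra_simps)
    with assms show False by blast
  qed
  have a: "a = 0"
  proof (rule ccontr)
    assume "a \<noteq> 0"
    then obtain x where "(\<Sum>k\<le>1. (\<lambda>k. [1,a] ! k) k * x ^ k) = 0"
      using alg_closed[of 1 "\<lambda>k. [1,a] ! k"] by auto
    hence "1 + a*x + b*x^2 + c*x^3 = 0" using b c by (simp add: eval_nat_numeral algebra_simps)
    with assms show False by blast
  qed
  from a b c show ?thesis by simp
qed

lemma nilcoef:
  fixes A :: "'a::alg_closed_field mat3"
  assumes "nilpotent_mat A"
  shows "c1 A = 0 \<and> c2 A = 0 \<and> det A = 0"
proof -
  have "\<forall>t. 1 + (- c1 A)*t + c2 A*t^2 + (- det A)*t^3 \<noteq> 0"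
    using detnz[OF assms] detexp[of _ A] by (simp add: algebra_simps)
  from polyroot[OF this] show ?thesis by simp
qed


lemma blk:
  fixes Y :: "'a::field mat3"
  assumes "c1 Y = 0" "c2 Y = 0" "det Y = 0" "Y$2$1 = 0" "Y$2$3 = 0"
  shows "(Y**Y)$1$1 = 0 \<and> (Y**Y)$3$1 = 0 \<and> (Y**Y)$1$3 = 0 \<and> (Y**Y)$3$3 = 0"
proof -
  have "(Y$2$2)^3 = 0" using assms unfolding c1_def c2_def det_3 by algebra
  hence z: "Y$2$2 = 0" by simp
  have s: "Y$1$1 + Y$3$3 = 0" using assms z unfolding c1_def by simp
  have p: "Y$1$1*Y$3$3 - Y$1$3*Y$3$1 = 0" using assms z unfolding c2_def by simp
  show ?thesis using s p assms unfolding mm3 by algebra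
qed

lemma col:
  fixes X :: "'a::field mat3"
  assumes "c1 X = 0" "c2 X = 0" "det X = 0" "X$2$1 = 0" "X$3$1 = 0"
  shows "X$1$1 = 0"
proof -
  have "(X$1$1)^3 = 0" using assms unfolding c1_def c2_def det_3 by algebra
  thus ?thesis by simp
qed

lemma sqcol:
  fixes X :: "'a::field mat3"
  assumes "c1 X = 0" "c2 X = 0" "det X = 0" "X$2$1 = 0" "(X**X)$2$1 = 0"
  shows "(X**X)$i$1 = 0"
proof (cases "X$3$1 = 0")
  case True
  with col assms have "X$1$1 = 0" by blast
  then show ?thesis using True assms(4) unfolding mm3 by simp
next
  case False
  have "X$2$3 * X$3$1 = 0" using assms(4,5) unfolding mm3 by simp
  hence "X$2$3 = 0" using False by simp
  from blk[OF assms(1-4) this] assms(5) show ?thesis using exhaust_3[of i] by auto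
qed

lemma core:
  fixes X Y :: "'a::field mat3"
  assumes X: "c1 X = 0" "c2 X = 0" "det X = 0"
    and Y: "c1 Y = 0" "c2 Y = 0" "det Y = 0"
    and h: "X$2$1 = 0" "(X**X)$2$1 = 0" "Y$2$1 = 0" "(Y**Y)$2$1 = 0" "(Y**X)$2$1 = 0"
  shows "(X**(X**(Y**Y)))$2$1 = 0 \<and> (X**(X**(Y**(Y**X))))$2$1 = 0"
proof -
  have XX: "\<And>i. (X**X)$i$1 = 0" using sqcol X h by blast
  have YY: "\<And>i. (Y**Y)$i$1 = 0" using sqcol Y h by blast
  have g1: "(X**(X**(Y**Y)))$2$1 = 0"
  proof -
    have e: "X**(X**(Y**Y)) = (X**X)**(Y**Y)" by (simp add: matrix_mul_assoc)
    show ?thesis unfolding e mm3[of "X**X"] YY by simp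
  qed
  have YYX: "((Y**Y)**X)$i$1 = 0" for i
  proof (cases "X$3$1 = 0")
    case True
    then show ?thesis unfolding mm3[of "Y**Y"] using YY h(1) by simp
  next
    case False
    have "Y$2$3 * X$3$1 = 0" using h(1,3,5) unfolding mm3 by simp
    hence y23: "Y$2$3 = 0" using False by simp
    have "(Y**Y)$2$3 = 0" using h(3) y23 unfolding mm3 by simp
    with blk[OF Y h(3) y23] show ?thesis unfolding mm3[of "Y**Y"] using YY h(1)
      using exhaust_3[of i] by auto
  qed
  have g2: "(X**(X**(Y**(Y**X))))$2$1 = 0"
  proof -
    have e: "X**(X**(Y**(Y**X))) = (X**X)**((Y**Y)**X)" by (simp add: matrix_mul_assoc)
    show ?thesis unfolding e mm3[of "X**X"] YYX by simp
  qed
  show ?thesis using g1 g2 by simp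
qed


lemma E_ent: "(matunit 1 2 ** (M::'a::comm_ring_1 mat3))$i$j = (if i = 1 then M$2$j else 0)"
  by (simp add: mm3 matunit_def)

lemma trEl: "trace (matunit 1 2 ** (M::'a::comm_ring_1 mat3)) = M$2$1"
  by (simp add: trace_def sum_3 E_ent)

lemma trEr: "trace ((M::'a::comm_ring_1 mat3) ** matunit 1 2) = M$2$1"
  by (simp add: trace_def sum_3 mm3 matunit_def)

lemma EE: "matunit 1 2 ** matunit 1 2 = (0::'a::comm_ring_1 mat3)"
  by (simp add: vec_eq_iff forall_3 mm3 matunit_def)

lemma EEM: "matunit 1 2 ** (matunit 1 2 ** M) = (0::'a::comm_ring_1 mat3)"
  by (simp add: vec_eq_iff forall_3 mm3 matunit_def)

lemma zl: "0 ** (M::'a::comm_ring_1 mat3) = 0" and zr: "M ** (0::'a::comm_ring_1 mat3) = 0"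
  by (simp_all add: vec_eq_iff forall_3 mm3)

lemma tr0: "trace (0::'a::comm_ring_1 mat3) = 0"
  by (simp add: trace_def)


lemma perm3:
  assumes "{i,j,k} = {1,2,3::nat}"
  shows "(i,j,k) \<in> {(1,2,3),(1,3,2),(2,1,3),(2,3,1),(3,1,2),(3,2,1)}"
proof -
  have a: "i = 1 \<or> i = 2 \<or> i = 3" "j = 1 \<or> j = 2 \<or> j = 3" "k = 1 \<or> k = 2 \<or> k = 3"
    using assms by blast+
  have b: "1 \<in> {i,j,k}" "2 \<in> {i,j,k}" "3 \<in> {i,j,k}" using assms by blast+
  from a show ?thesis using b by (elim disjE) simp_all
qed

theorem lemma8p1:
  fixes A2 A3 B2 B3 :: "'a::{alg_closed_field, field_char_0} mat3"
  assumes "nilpotent_mat (matunit 1 2 :: 'a mat3)"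
    and "nilpotent_mat A2" and "nilpotent_mat A3"
    and "nilpotent_mat (0 :: 'a mat3)"
    and "nilpotent_mat B2" and "nilpotent_mat B3"
    and "\<forall>w\<in>S33. trw (triple (matunit 1 2) A2 A3) w = trw (triple 0 B2 B3) w"
  shows "\<forall>w\<in>P33. trw (triple (matunit 1 2) A2 A3) w = trw (triple 0 B2 B3) w"
proof -
  let ?E = "matunit 1 2 :: 'a mat3"
  let ?TA = "triple ?E A2 A3" and ?TB = "triple 0 B2 B3"
  note H = assms(7)
  have s12: "[1,2] \<in> S33" "[1,3] \<in> S33" "[1,2,2] \<in> S33" "[1,3,3] \<in> S33"
    "[1,2,3] \<in> S33" "[1,3,2] \<in> S33"
    unfolding S33_def by ((intro UnI1 CollectI; rule exI[of _ 1]; simp)+)[4] blast+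
  have hh: "trw ?TA w = 0" if hw: "w \<in> S33" "hd w = 1" "w \<noteq> []" for w
  proof -
    obtain v where v: "w = 1 # v" using hw by (cases w) auto
    have "trw ?TB w = 0" unfolding v by (simp add: trw_def triple_def zl tr0)
    thus ?thesis using H hw by auto
  qed
  have h1: "A2$2$1 = 0" using hh[OF s12(1)] by (simp add: trw_def triple_def trEl)
  have h2: "A3$2$1 = 0" using hh[OF s12(2)] by (simp add: trw_def triple_def trEl)
  have h3: "(A2**A2)$2$1 = 0" using hh[OF s12(3)] by (simp add: trw_def triple_def trEl)
  have h4: "(A3**A3)$2$1 = 0" using hh[OF s12(4)] by (simp add: trw_def triple_def trEl)
  have h5: "(A2**A3)$2$1 = 0" using hh[OF s12(5)] by (simp add: trw_def triple_def trEl)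
  have h6: "(A3**A2)$2$1 = 0" using hh[OF s12(6)] by (simp add: trw_def triple_def trEl)
  have n2: "c1 A2 = 0" "c2 A2 = 0" "det A2 = 0" using nilcoef[OF assms(2)] by auto
  have n3: "c1 A3 = 0" "c2 A3 = 0" "det A3 = 0" using nilcoef[OF assms(3)] by auto
  have C1: "(A2**(A2**(A3**A3)))$2$1 = 0 \<and> (A2**(A2**(A3**(A3**A2))))$2$1 = 0"
    using core[OF n2 n3 h1 h3 h2 h4 h6] .
  have C2: "(A3**(A3**(A2**A2)))$2$1 = 0 \<and> (A3**(A3**(A2**(A2**A3))))$2$1 = 0"
    using core[OF n3 n2 h2 h4 h1 h3 h5] .
  have t1: "trw ?TA [2,2,3,3,1] = (A2**(A2**(A3**A3)))$2$1"
  proof -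
    have "trw ?TA [2,2,3,3,1] = trace ((A2**(A2**(A3**A3))) ** ?E)"
      by (simp add: trw_def triple_def matrix_mul_assoc)
    thus ?thesis by (simp add: trEr)
  qed
  have t2: "trw ?TA [3,3,2,2,1] = (A3**(A3**(A2**A2)))$2$1"
  proof -
    have "trw ?TA [3,3,2,2,1] = trace ((A3**(A3**(A2**A2))) ** ?E)"
      by (simp add: trw_def triple_def matrix_mul_assoc)
    thus ?thesis by (simp add: trEr)
  qed
  have t3: "trw ?TA [2,2,3,3,2,1] = (A2**(A2**(A3**(A3**A2))))$2$1"
  proof -
    have "trw ?TA [2,2,3,3,2,1] = trace ((A2**(A2**(A3**(A3**A2)))) ** ?E)"
      by (simp add: trw_def triple_def matrix_mul_assoc)
    thus ?thesis by (simp add: trEr)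
  qed
  have t4: "trw ?TA [3,3,2,2,3,1] = (A3**(A3**(A2**(A2**A3))))$2$1"
  proof -
    have "trw ?TA [3,3,2,2,3,1] = trace ((A3**(A3**(A2**(A2**A3)))) ** ?E)"
      by (simp add: trw_def triple_def matrix_mul_assoc)
    thus ?thesis by (simp add: trEr)
  qed
  define L :: "nat list set" where "L = {[1,1,2,2,3],[1,1,3,3,2],[2,2,1,1,3],[2,2,3,3,1],[3,3,1,1,2],[3,3,2,2,1],
      [1,1,2,2,1,3],[1,1,3,3,1,2],[2,2,1,1,2,3],[2,2,3,3,2,1],[3,3,1,1,3,2],[3,3,2,2,3,1],
      [1,1,2,2,3,3]}"
  have PP: "[i,i,j,j,k] \<in> L \<and> [i,i,j,j,i,k] \<in> L" if "{i,j,k} = {1,2,3::nat}" for i j k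
    using perm3[OF that] unfolding L_def
    by (simp only: insert_iff empty_iff prod.inject; elim disjE conjE; simp)
  have P'set: "P33' \<subseteq> L"
  proof
    fix w assume "w \<in> P33'"
    then show "w \<in> L" unfolding P33'_def
    proof (elim UnE)
      assume "w \<in> {[i,i,j,j,k] | i j k. {i,j,k} = {1,2,3::nat}}"
      then obtain i j k where "w = [i,i,j,j,k]" "{i,j,k} = {1,2,3::nat}" by blast
      then show ?thesis using PP by blast
    next
      assume "w \<in> {[i,i,j,j,i,k] | i j k. {i,j,k} = {1,2,3::nat}}"
      then obtain i j k where "w = [i,i,j,j,i,k]" "{i,j,k} = {1,2,3::nat}" by blast
      then show ?thesis using PP by blast
    next
      assume "w \<in> {[1,1,2,2,3,3]}"
      then show ?thesis unfolding L_def by simp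
    qed
  qed
  have P': "trw ?TA w = trw ?TB w" if "w \<in> P33'" for w
  proof -
    have B0: "trw ?TB w = 0"
      using P'set that unfolding L_def
      apply -
      apply (drule (1) subsetD)
      apply (elim insertE)
      by (simp_all add: trw_def triple_def zl zr tr0)
    have A0: "trw ?TA w = 0"
      using P'set that unfolding L_def
      apply -
      apply (drule (1) subsetD)
      apply (elim insertE)
      using t1 t2 t3 t4 C1 C2
      by (simp_all add: trw_def triple_def EE EEM zl zr tr0)
    show ?thesis using A0 B0 by simp
  qed
  show ?thesis using H P' unfolding P33_def by blast
qed

end
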